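(* Let $n\ge1$, let $\Delta\subset\mathbb{R}^n$ be an $n$-simplex with vertices $\mathbf{x}_0,\dots,\mathbf{x}_n$, and let $f\colon\Delta\to\mathbb{R}$ be convex. Then $$\operatorname{Avg}(f,\Delta)\le \alpha_n\frac{1}{\binom{n+1}{2}}\sum_{0\le i<j\le n}f\!\left(\frac{\mathbf{x}_i+\mathbf{x}_j}{2}\right)+\beta_n\frac{f(\mathbf{x}_0)+\dots+f(\mathbf{x}_n)}{n+1},$$ where $\alpha_n=\frac{\lfloor (n+1)/2\rfloor}{n+1}$ and $\beta_n=\frac{\lceil (n+1)/2\rceil}{n+1}$.
   Context: $\mathbf{x}_0,\dots,\mathbf{x}_n\in\mathbb{R}^n$ are affinely independent and $\Delta=\operatorname{conv}\{\mathbf{x}_0,\dots,\mathbf{x}_n\}$. $\operatorname{Avg}(f,\Delta)=\frac{1}{\operatorname{Vol}_n(\Delta)}\int_\Delta f(\mathbf{x})\,d\mathbf{x}$ (Lebesgue measure on $\mathbb{R}^n$). *)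

theory Defs
  imports "HOL-Analysis.Analysis"
begin

definition Avg :: "('a::euclidean_space \<Rightarrow> real) \<Rightarrow> 'a set \<Rightarrow> real" where
  "Avg f S = (LINT x : S | lborel. f x) / measure lborel S"

end

theory Submission
  imports Defs
begin

lemma cont_int:
  fixes h :: "'a::euclidean_space \<Rightarrow> 'b::euclidean_space"
  assumes "compact K" "continuous_on K h"
  shows "h integrable_on K"
  by (metis assms borel_integrable_compact set_borel_integral_eq_integral(1) set_integrable_def)

lemma cont_absint:
  fixes h :: "'a::euclidean_space \<Rightarrow> 'b::euclidean_space"
  assumes "compact K" "continuous_on K h"
  shows "h absolutely_integrable_on K"
  unfolding absolutely_integrable_on_def
  using assms by (auto intro!: cont_int continuous_intros)

lemma cov_affine:
  fixes g :: "(real,'m::{finite,wellorder}) vec \<Rightarrow> (real,'m) vec"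
  assumes "linear G" "\<And>p. g p = G p + t" "compact S" "inj_on g S" "continuous_on (g ` S) h"
  shows "integral (g ` S) h = \<bar>det (matrix G)\<bar> * integral S (\<lambda>p. h (g p))"
proof -
  have der: "\<And>x. x \<in> S \<Longrightarrow> (g has_derivative G) (at x within S)"
  proof -
    fix x
    have "((\<lambda>p. G p + t) has_derivative G) (at x within S)"
      by (intro has_derivative_add_const linear_imp_has_derivative assms)
    moreover have "g = (\<lambda>p. G p + t)" using assms(2) by (simp add: fun_eq_iff)
    ultimately show "(g has_derivative G) (at x within S)" by simp
  qed
  have cg: "compact (g ` S)"
    using assms(3) der by (intro compact_continuous_image has_derivative_continuous_on) auto
  define H where "H = (\<lambda>y. h y *\<^sub>R (axis 1 1 :: real^1))"
  have cH: "continuous_on (g ` S) H" unfolding H_def using assms(5) by (intro continuous_intros)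
  have ai: "H absolutely_integrable_on (g ` S)"
    by (rule cont_absint[OF cg cH])
  from has_absolute_integral_change_of_variables_compact[OF assms(3) der assms(4), of H "integral (g ` S) H"] ai
  have 1: "integral S (\<lambda>x. \<bar>det (matrix G)\<bar> *\<^sub>R H (g x)) = integral (g ` S) H"
   and 2: "(\<lambda>x. \<bar>det (matrix G)\<bar> *\<^sub>R H (g x)) absolutely_integrable_on S" by blast+
  have "integral (g ` S) h = integral (g ` S) H $ 1"
    using integral_component_eq_cart[OF set_lebesgue_integral_eq_integral(1)[OF ai], of 1]
    by (simp add: H_def)
  also have "\<dots> = integral S (\<lambda>x. \<bar>det (matrix G)\<bar> *\<^sub>R H (g x)) $ 1" using 1 by simp
  also have "\<dots> = integral S (\<lambda>x. \<bar>det (matrix G)\<bar> * h (g x))"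
    using integral_component_eq_cart[OF set_lebesgue_integral_eq_integral(1)[OF 2], of 1]
    by (simp add: H_def)
  finally show ?thesis by simp
qed

locale bary =
  fixes n :: nat and x :: "nat \<Rightarrow> (real,'m::{finite,wellorder}) vec"
    and lam :: "nat \<Rightarrow> (real,'m) vec \<Rightarrow> real"
  assumes n_def: "n = CARD('m)"
    and lin: "\<And>k. linear (\<lambda>p. lam k p - lam k 0)"
    and delta: "\<And>k j. k \<le> n \<Longrightarrow> j \<le> n \<Longrightarrow> lam k (x j) = (if k = j then 1 else 0)"
    and sum1: "\<And>p. (\<Sum>k\<in>{0..n}. lam k p) = 1"
    and sumx: "\<And>p. (\<Sum>k\<in>{0..n}. lam k p *\<^sub>R x k) = p"
    and aff: "\<not> affine_dependent (x ` {0..n})"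
begin

definition "Delta = convex hull (x ` {0..n})"

lemma ell_add: "lam k (p + v) = lam k p + (lam k v - lam k 0)"
proof -
  have "lam k (p + v) - lam k 0 = (lam k p - lam k 0) + (lam k v - lam k 0)"
    using linear_add[OF lin[of k]] by simp
  then show ?thesis by simp
qed

lemma ell_scale: "lam k (c *\<^sub>R v) - lam k 0 = c * (lam k v - lam k 0)"
  using linear_scale[OF lin[of k]] by simp

lemma ell_diff: "lam k (u - v) - lam k 0 = lam k u - lam k v"
proof -
  have "lam k (u - v) - lam k 0 = (lam k u - lam k 0) - (lam k v - lam k 0)"
    using linear_diff[OF lin[of k]] by simp
  then show ?thesis by simp
qed

lemma lam_shift: "lam k (p + t *\<^sub>R (u - v)) = lam k p + t * (lam k u - lam k v)"
  by (simp add: ell_add ell_scale ell_diff)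

lemma lam_affine: "a + b = 1 \<Longrightarrow> lam k (a *\<^sub>R u + b *\<^sub>R v) = a * lam k u + b * lam k v"
proof -
  assume ab: "a + b = 1"
  have "lam k (a *\<^sub>R u + b *\<^sub>R v) = lam k (a *\<^sub>R u) + (lam k (b *\<^sub>R v) - lam k 0)"
    by (rule ell_add)
  also have "\<dots> = (a * (lam k u - lam k 0) + lam k 0) + b * (lam k v - lam k 0)"
    using ell_scale[of k a u] ell_scale[of k b v] by simp
  also have "\<dots> = a * lam k u + b * lam k v + (1 - a - b) * lam k 0" by (simp add: algebra_simps)
  also have "\<dots> = a * lam k u + b * lam k v" using ab by simp
  finally show ?thesis .
qed

lemma lam_comb:
  assumes "sum \<mu> {0..n} = 1" "k \<le> n"
  shows "lam k (\<Sum>j\<in>{0..n}. \<mu> j *\<^sub>R x j) = \<mu> k"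
proof -
  have "lam k (\<Sum>j\<in>{0..n}. \<mu> j *\<^sub>R x j) - lam k 0 = (\<Sum>j\<in>{0..n}. \<mu> j * (lam k (x j) - lam k 0))"
    using linear_sum[OF lin[of k], of "\<lambda>j. \<mu> j *\<^sub>R x j" "{0..n}"] linear_scale[OF lin[of k]]
    by simp
  also have "\<dots> = (\<Sum>j\<in>{0..n}. \<mu> j * lam k (x j)) - lam k 0"
    using assms(1) by (simp add: algebra_simps sum_subtractf sum_distrib_right[symmetric])
  also have "(\<Sum>j\<in>{0..n}. \<mu> j * lam k (x j)) = (\<Sum>j\<in>{0..n}. if j = k then \<mu> j else 0)"
    using assms(2) by (intro sum.cong) (auto simp: delta)
  also have "\<dots> = \<mu> k" using assms(2) by simp
  finally show ?thesis by simp
qed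

lemma coord_eq:
  assumes "\<And>k. k \<le> n \<Longrightarrow> lam k p = lam k q"
  shows "p = q"
proof -
  have "p = (\<Sum>k\<in>{0..n}. lam k p *\<^sub>R x k)" by (rule sumx[symmetric])
  also have "\<dots> = (\<Sum>k\<in>{0..n}. lam k q *\<^sub>R x k)" using assms by (intro sum.cong) auto
  also have "\<dots> = q" by (rule sumx)
  finally show ?thesis .
qed

lemma inj_x: "inj_on x {0..n}"
proof (rule inj_onI)
  fix i j assume ij: "i \<in> {0..n}" "j \<in> {0..n}" "x i = x j"
  then have "lam i (x j) = 1" using delta[of i i] ij by simp
  then show "i = j" using delta[of i j] ij by (auto split: if_splits)
qed

lemma Delta_eq: "Delta = {p. \<forall>k\<le>n. 0 \<le> lam k p}"
proof
  show "Delta \<subseteq> {p. \<forall>k\<le>n. 0 \<le> lam k p}"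
  proof
    fix p assume "p \<in> Delta"
    then obtain u where u: "\<forall>y\<in>x ` {0..n}. 0 \<le> u y" "sum u (x ` {0..n}) = 1"
      "(\<Sum>y\<in>x ` {0..n}. u y *\<^sub>R y) = p"
      unfolding Delta_def by (auto simp: convex_hull_finite)
    have s1: "sum (u \<circ> x) {0..n} = 1" using u(2) sum.reindex[OF inj_x, of u] by simp
    have s2: "(\<Sum>j\<in>{0..n}. (u \<circ> x) j *\<^sub>R x j) = p"
      using u(3) sum.reindex[OF inj_x, of "\<lambda>y. u y *\<^sub>R y"] by simp
    show "p \<in> {p. \<forall>k\<le>n. 0 \<le> lam k p}"
      using lam_comb[OF s1] s2 u(1) by auto
  qed
next
  show "{p. \<forall>k\<le>n. 0 \<le> lam k p} \<subseteq> Delta"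
  proof
    fix p assume p: "p \<in> {p. \<forall>k\<le>n. 0 \<le> lam k p}"
    have "(\<Sum>k\<in>{0..n}. lam k p *\<^sub>R x k) \<in> Delta"
      unfolding Delta_def
      by (rule convex_sum) (use p sum1 in \<open>auto intro: hull_inc\<close>)
    then show "p \<in> Delta" by (simp add: sumx)
  qed
qed

lemma lam_cont: "continuous_on A (lam k)"
proof -
  have "continuous_on A (\<lambda>p. (lam k p - lam k 0) + lam k 0)"
    by (intro continuous_intros linear_continuous_on) (simp add: lin flip: linear_conv_bounded_linear)
  then show ?thesis by simp
qed

lemma compact_Delta: "compact Delta"
  unfolding Delta_def by (intro compact_convex_hull finite_imp_compact) auto

lemma x_in_Delta: "j \<le> n \<Longrightarrow> x j \<in> Delta"
  unfolding Delta_def by (auto intro: hull_inc)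

lemma V_pos: "0 < measure lebesgue Delta"
proof -
  have "card (x ` {0..n}) = Suc n" using card_image[OF inj_x] by simp
  also have "\<dots> = Suc DIM((real,'m) vec)" by (simp add: n_def)
  finally have "interior Delta \<noteq> {}"
    using interior_convex_hull_eq_empty aff unfolding Delta_def by blast
  then obtain c e where "0 < e" "ball c e \<subseteq> Delta"
    by (meson all_not_in_conv mem_interior)
  then have "0 < measure lborel (ball c e)" using content_ball_pos by blast
  also have "measure lborel (ball c e) = measure lebesgue (ball c e)" by (simp add: measure_completion)
  also have "\<dots> \<le> measure lebesgue Delta"
    using \<open>ball c e \<subseteq> Delta\<close> compact_Delta
    by (intro measure_mono_fmeasurable) (auto simp: lmeasurable_compact)
  finally show ?thesis .
qed

end

lemma linear_inner_rep:
  fixes l :: "'a::euclidean_space \<Rightarrow> real"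
  assumes "linear l"
  shows "l p = (\<Sum>b\<in>Basis. l b *\<^sub>R b) \<bullet> p"
proof -
  have "l p = l (\<Sum>b\<in>Basis. (p \<bullet> b) *\<^sub>R b)" by (simp add: euclidean_representation)
  also have "\<dots> = (\<Sum>b\<in>Basis. l ((p \<bullet> b) *\<^sub>R b))" by (rule linear_sum[OF assms])
  also have "\<dots> = (\<Sum>b\<in>Basis. (p \<bullet> b) * l b)"
    using linear_scale[OF assms] by simp
  also have "\<dots> = (\<Sum>b\<in>Basis. l b * (b \<bullet> p))"
    by (rule sum.cong) (auto simp: inner_commute)
  also have "\<dots> = (\<Sum>b\<in>Basis. l b *\<^sub>R b) \<bullet> p"
    by (simp add: inner_sum_left)
  finally show ?thesis .
qed

lemma linear_plus_scale:
  fixes l :: "'a::real_vector \<Rightarrow> real"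
  assumes "linear l"
  shows "linear (\<lambda>p. p + l p *\<^sub>R v)"
proof (rule linearI)
  fix p q :: 'a and c :: real
  show "p + q + l (p + q) *\<^sub>R v = p + l p *\<^sub>R v + (q + l q *\<^sub>R v)"
    using linear_add[OF assms] by (simp add: algebra_simps)
  show "c *\<^sub>R p + l (c *\<^sub>R p) *\<^sub>R v = c *\<^sub>R (p + l p *\<^sub>R v)"
    using linear_scale[OF assms] by (simp add: algebra_simps)
qed

context bary begin

definition T :: "nat \<Rightarrow> nat \<Rightarrow> (real,'m) vec \<Rightarrow> (real,'m) vec"
  where "T i j p = p + (lam j p - lam i p) *\<^sub>R (x i - x j)"
definition Sh :: "nat \<Rightarrow> nat \<Rightarrow> (real,'m) vec \<Rightarrow> (real,'m) vec"
  where "Sh i j p = p + lam j p *\<^sub>R (x j - x i)"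
definition D :: "nat \<Rightarrow> nat \<Rightarrow> (real,'m) vec set"
  where "D i j = {p \<in> Delta. lam j p \<le> lam i p}"

lemma lam_T:
  assumes "i \<le> n" "j \<le> n" "i \<noteq> j" "k \<le> n"
  shows "lam k (T i j p) = (if k = i then lam j p else if k = j then lam i p else lam k p)"
  using assms unfolding T_def by (simp add: lam_shift delta)

lemma lam_Sh:
  assumes "i \<le> n" "j \<le> n" "i \<noteq> j" "k \<le> n"
  shows "lam k (Sh i j p) = (if k = i then lam i p - lam j p else if k = j then 2 * lam j p else lam k p)"
  using assms unfolding Sh_def by (simp add: lam_shift delta)

lemma T_T:
  assumes "i \<le> n" "j \<le> n" "i \<noteq> j"
  shows "T i j (T i j p) = p"
  by (rule coord_eq) (use assms in \<open>simp add: lam_T\<close>)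

lemma T_affine:
  obtains G t where "linear G" "\<And>p. T i j p = G p + t"
proof
  let ?l = "\<lambda>p. (lam j p - lam j 0) - (lam i p - lam i 0)"
  have "linear ?l" using linear_compose_sub[OF lin[of j] lin[of i]] by simp
  then show "linear (\<lambda>p. p + ?l p *\<^sub>R (x i - x j))" by (rule linear_plus_scale)
  show "T i j p = (p + ?l p *\<^sub>R (x i - x j)) + (lam j 0 - lam i 0) *\<^sub>R (x i - x j)" for p
    unfolding T_def by (simp add: algebra_simps)
qed

lemma Sh_affine:
  obtains G t where "linear G" "\<And>p. Sh i j p = G p + t"
proof
  let ?l = "\<lambda>p. (lam j p - lam j 0)"
  have "linear ?l" using lin[of j] .
  then show "linear (\<lambda>p. p + ?l p *\<^sub>R (x j - x i))" by (rule linear_plus_scale)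
  show "Sh i j p = (p + ?l p *\<^sub>R (x j - x i)) + (lam j 0) *\<^sub>R (x j - x i)" for p
    unfolding Sh_def by (simp add: algebra_simps)
qed

lemma T_cov:
  assumes "i \<le> n" "j \<le> n" "i \<noteq> j"
  obtains d where "\<And>S (h :: (real,'m) vec \<Rightarrow> real). compact S \<Longrightarrow> continuous_on UNIV h \<Longrightarrow>
     integral (T i j ` S) h = d * integral S (\<lambda>p. h (T i j p))"
proof -
  obtain G t where G: "linear G" "\<And>p. T i j p = G p + t" using T_affine[of i j] by blast
  have inj: "inj_on (T i j) S" for S
    by (rule inj_on_inverseI[where g="T i j"]) (use assms T_T in auto)
  have "\<And>S h. compact S \<Longrightarrow> continuous_on UNIV h \<Longrightarrow>
     integral (T i j ` S) h = \<bar>det (matrix G)\<bar> * integral S (\<lambda>p. h (T i j p))"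
    by (rule cov_affine[OF G _ inj]) (auto elim: continuous_on_subset[of UNIV])
  then show ?thesis by (rule that)
qed

lemma Sh_inj:
  assumes "i \<le> n" "j \<le> n" "i \<noteq> j"
  shows "inj (Sh i j)"
proof (rule injI)
  fix p q assume e: "Sh i j p = Sh i j q"
  have "lam j (Sh i j p) = lam j (Sh i j q)" using e by simp
  then have j: "lam j p = lam j q" using assms by (simp add: lam_Sh)
  show "p = q"
  proof (rule coord_eq)
    fix k assume "k \<le> n"
    have "lam k (Sh i j p) = lam k (Sh i j q)" using e by simp
    then show "lam k p = lam k q" using assms j \<open>k \<le> n\<close> unfolding lam_Sh[OF assms \<open>k \<le> n\<close>]
      by (auto split: if_splits)
  qed
qed

lemma Sh_cov:
  assumes "i \<le> n" "j \<le> n" "i \<noteq> j"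
  obtains d where "\<And>S (h :: (real,'m) vec \<Rightarrow> real). compact S \<Longrightarrow> continuous_on UNIV h \<Longrightarrow>
     integral (Sh i j ` S) h = d * integral S (\<lambda>p. h (Sh i j p))"
proof -
  obtain G t where G: "linear G" "\<And>p. Sh i j p = G p + t" using Sh_affine[of i j] by blast
  have inj: "inj_on (Sh i j) S" for S
    using Sh_inj[OF assms] by (rule inj_on_subset) simp
  have "\<And>S h. compact S \<Longrightarrow> continuous_on UNIV h \<Longrightarrow>
     integral (Sh i j ` S) h = \<bar>det (matrix G)\<bar> * integral S (\<lambda>p. h (Sh i j p))"
    by (rule cov_affine[OF G _ inj]) (auto elim: continuous_on_subset[of UNIV])
  then show ?thesis by (rule that)
qed

end

lemma int_Un:
  fixes h :: "'a::euclidean_space \<Rightarrow> real"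
  assumes "h integrable_on A" "h integrable_on B" "negligible (A \<inter> B)"
  shows "integral (A \<union> B) h = integral A h + integral B h"
  using has_integral_Un[OF integrable_integral[OF assms(1)] integrable_integral[OF assms(2)] assms(3)]
  by (rule integral_unique)

context bary begin

definition "V = measure lebesgue Delta"

lemma V_int: "V = integral Delta (\<lambda>_. 1)"
  unfolding V_def using lmeasure_integral[OF lmeasurable_compact[OF compact_Delta]] .

lemma V_gt0: "V > 0" unfolding V_def by (rule V_pos)

lemma int_cont:
  assumes "compact S" "continuous_on UNIV h"
  shows "(h :: (real,'m) vec \<Rightarrow> real) integrable_on S"
  using assms by (auto intro: cont_int continuous_on_subset[of UNIV])

lemma T_Delta:
  assumes "i \<le> n" "j \<le> n" "i \<noteq> j"
  shows "T i j ` Delta = Delta"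
proof
  show "T i j ` Delta \<subseteq> Delta"
    using assms by (auto simp: Delta_eq lam_T)
  show "Delta \<subseteq> T i j ` Delta"
  proof
    fix q assume q: "q \<in> Delta"
    then have "T i j q \<in> Delta" using assms by (auto simp: Delta_eq lam_T)
    moreover have "q = T i j (T i j q)" using T_T[OF assms] by simp
    ultimately show "q \<in> T i j ` Delta" by blast
  qed
qed

lemma T_D:
  assumes "i \<le> n" "j \<le> n" "i \<noteq> j"
  shows "T i j ` D i j = D j i"
proof
  show "T i j ` D i j \<subseteq> D j i"
    using assms by (auto simp: D_def Delta_eq lam_T)
  show "D j i \<subseteq> T i j ` D i j"
  proof
    fix q assume q: "q \<in> D j i"
    then have "T i j q \<in> D i j" using assms by (auto simp: D_def Delta_eq lam_T)
    moreover have "q = T i j (T i j q)" using T_T[OF assms] by simp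
    ultimately show "q \<in> T i j ` D i j" by blast
  qed
qed

lemma Sh_D:
  assumes "i \<le> n" "j \<le> n" "i \<noteq> j"
  shows "Sh i j ` D i j = Delta"
proof
  show "Sh i j ` D i j \<subseteq> Delta"
    using assms by (auto simp: D_def Delta_eq lam_Sh)
  show "Delta \<subseteq> Sh i j ` D i j"
  proof
    fix q assume q: "q \<in> Delta"
    define p where "p = q + (- (lam j q / 2)) *\<^sub>R (x j - x i)"
    have lp: "lam k p = (if k = i then lam i q + lam j q / 2 else if k = j then lam j q / 2 else lam k q)"
      if "k \<le> n" for k
      using assms that unfolding p_def lam_shift by (simp add: delta)
    have "p \<in> D i j" using q assms lp by (auto simp: D_def Delta_eq)
    moreover have "Sh i j p = q"
      by (rule coord_eq) (use assms lp in \<open>simp add: lam_Sh\<close>)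
    ultimately show "q \<in> Sh i j ` D i j" by blast
  qed
qed

lemma compact_D: "compact (D i j)"
proof -
  have "D i j = Delta \<inter> {p. lam j p \<le> lam i p}" by (auto simp: D_def)
  moreover have "closed {p. lam j p \<le> lam i p}"
    by (intro closed_Collect_le lam_cont)
  ultimately show ?thesis using compact_Delta by (simp add: compact_Int_closed)
qed

lemma negl_eq:
  assumes "i \<le> n" "j \<le> n" "i \<noteq> j"
  shows "negligible {p. lam i p = lam j p}"
proof -
  define l where "l = (\<lambda>p. (lam i p - lam i 0) - (lam j p - lam j 0))"
  have ll: "linear l" unfolding l_def using linear_compose_sub[OF lin[of i] lin[of j]] by simp
  define a where "a = (\<Sum>b\<in>Basis. l b *\<^sub>R b)"
  have la: "l p = a \<bullet> p" for p unfolding a_def by (rule linear_inner_rep[OF ll])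
  have "l (x i) - l (x j) = 2" unfolding l_def using assms by (simp add: delta)
  then have "a \<noteq> 0" using la by auto
  moreover have "{p. lam i p = lam j p} = {p. a \<bullet> p = lam j 0 - lam i 0}"
    by (auto simp: la[symmetric] l_def)
  ultimately show ?thesis by (simp add: negligible_hyperplane)
qed

lemma int_lam_eq:
  assumes "i \<le> n" "j \<le> n"
  shows "integral Delta (lam i) = integral Delta (lam j)"
proof (cases "i = j")
  case False
  obtain d where d: "\<And>S (h :: (real,'m) vec \<Rightarrow> real). compact S \<Longrightarrow> continuous_on UNIV h \<Longrightarrow>
     integral (T i j ` S) h = d * integral S (\<lambda>p. h (T i j p))"
    using T_cov[OF assms False] by blast
  have "V = d * V" using d[OF compact_Delta, of "\<lambda>_. 1"] T_Delta[OF assms False]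
    by (simp add: V_int)
  then have d1: "d = 1" using V_gt0 by simp
  have "integral Delta (lam i) = d * integral Delta (\<lambda>p. lam i (T i j p))"
    using d[OF compact_Delta lam_cont] T_Delta[OF assms False] by simp
  also have "\<dots> = integral Delta (lam j)"
    using assms False d1 by (simp add: lam_T)
  finally show ?thesis .
qed simp

lemma int_lam:
  assumes "k \<le> n"
  shows "integral Delta (lam k) = V / (n + 1)"
proof -
  have "V = integral Delta (\<lambda>p. \<Sum>k\<in>{0..n}. lam k p)" by (simp add: sum1 V_int)
  also have "\<dots> = (\<Sum>k\<in>{0..n}. integral Delta (lam k))"
    by (rule integral_sum) (auto intro: int_cont compact_Delta lam_cont)
  also have "\<dots> = (\<Sum>k\<in>{0..n}. integral Delta (lam 0))"
    by (rule sum.cong) (auto intro: int_lam_eq)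
  also have "\<dots> = (n + 1) * integral Delta (lam 0)" by simp
  finally have "integral Delta (lam 0) = V / (n + 1)" by (simp add: field_simps)
  then show ?thesis using int_lam_eq[OF assms, of 0] by simp
qed

lemma int_min:
  assumes "i \<le> n" "j \<le> n" "i \<noteq> j"
  shows "integral Delta (\<lambda>p. min (lam i p) (lam j p)) = V / (2 * (n + 1))"
proof -
  obtain d where d: "\<And>S (h :: (real,'m) vec \<Rightarrow> real). compact S \<Longrightarrow> continuous_on UNIV h \<Longrightarrow>
     integral (T i j ` S) h = d * integral S (\<lambda>p. h (T i j p))"
    using T_cov[OF assms] by blast
  have "V = d * V" using d[OF compact_Delta, of "\<lambda>_. 1"] T_Delta[OF assms]
    by (simp add: V_int)
  then have d1: "d = 1" using V_gt0 by simp
  obtain e where e: "\<And>S (h :: (real,'m) vec \<Rightarrow> real). compact S \<Longrightarrow> continuous_on UNIV h \<Longrightarrow>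
     integral (Sh i j ` S) h = e * integral S (\<lambda>p. h (Sh i j p))"
    using Sh_cov[OF assms] by blast
  have DE: "Delta = D i j \<union> D j i" by (auto simp: D_def)
  have neg: "negligible (D i j \<inter> D j i)"
    by (rule negligible_subset[OF negl_eq[OF assms]]) (auto simp: D_def)
  have cmin: "continuous_on UNIV (\<lambda>p. min (lam i p) (lam j p))"
    by (intro continuous_intros lam_cont)
  have split: "integral Delta h = integral (D i j) h + integral (D j i) h"
    if "continuous_on UNIV h" for h :: "(real,'m) vec \<Rightarrow> real"
    unfolding DE by (rule int_Un[OF int_cont[OF compact_D that] int_cont[OF compact_D that] neg])
  have swap: "integral (D j i) h = integral (D i j) (\<lambda>p. h (T i j p))"
    if "continuous_on UNIV h" for h :: "(real,'m) vec \<Rightarrow> real"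
    using d[OF compact_D that, of i j] T_D[OF assms] d1 by simp
  have "V = integral (D i j) (\<lambda>_. 1) + integral (D j i) (\<lambda>_. 1)"
    using split[of "\<lambda>_. 1"] by (simp add: V_int)
  also have "integral (D j i) (\<lambda>_. 1) = integral (D i j) (\<lambda>_. 1::real)"
    using swap[of "\<lambda>_. 1"] by simp
  finally have VD: "integral (D i j) (\<lambda>_. 1) = V / 2" by simp
  have "V = e * integral (D i j) (\<lambda>_. 1)"
    using e[OF compact_D, of "\<lambda>_. 1" i j] Sh_D[OF assms] by (simp add: V_int)
  then have e2: "e = 2" using VD V_gt0 by (simp add: field_simps)
  have "integral Delta (lam j) = e * integral (D i j) (\<lambda>p. lam j (Sh i j p))"
    using e[OF compact_D lam_cont, of i j j] Sh_D[OF assms] by simp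
  also have "\<dots> = e * integral (D i j) (\<lambda>p. 2 * lam j p)"
    using assms by (simp add: lam_Sh)
  also have "\<dots> = 4 * integral (D i j) (lam j)"
    using e2 by simp
  finally have IDj: "integral (D i j) (lam j) = V / (4 * (n + 1))"
    using int_lam[OF assms(2)] by (simp add: field_simps)
  have "integral Delta (\<lambda>p. min (lam i p) (lam j p))
      = integral (D i j) (\<lambda>p. min (lam i p) (lam j p)) + integral (D j i) (\<lambda>p. min (lam i p) (lam j p))"
    by (rule split[OF cmin])
  also have "integral (D j i) (\<lambda>p. min (lam i p) (lam j p))
        = integral (D i j) (\<lambda>p. min (lam i (T i j p)) (lam j (T i j p)))"
    by (rule swap[OF cmin])
  also have "\<dots> = integral (D i j) (\<lambda>p. min (lam j p) (lam i p))"
    using assms by (simp add: lam_T)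
  also have "integral (D i j) (\<lambda>p. min (lam j p) (lam i p)) = integral (D i j) (lam j)"
    by (rule integral_cong) (auto simp: D_def)
  also have "integral (D i j) (\<lambda>p. min (lam i p) (lam j p)) = integral (D i j) (lam j)"
    by (rule integral_cong) (auto simp: D_def)
  finally have "integral Delta (\<lambda>p. min (lam i p) (lam j p)) = 2 * integral (D i j) (lam j)" by simp
  also have "\<dots> = V / (2 * (n + 1))" unfolding IDj by (simp add: field_simps)
  finally show ?thesis .
qed

end

context bary begin

lemma n_pos: "1 \<le> n" using n_def by simp

lemma lam_nonneg: "p \<in> Delta \<Longrightarrow> k \<le> n \<Longrightarrow> 0 \<le> lam k p"
  by (simp add: Delta_eq)

lemma lam_le1: assumes "p \<in> Delta" "k \<le> n" shows "lam k p \<le> 1"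
proof -
  have "lam k p \<le> (\<Sum>j\<in>{0..n}. lam j p)"
    by (rule member_le_sum) (use assms lam_nonneg in auto)
  then show ?thesis by (simp add: sum1)
qed

lemma jensen_coords:
  assumes cvx: "convex_on Delta f" and p: "p \<in> Delta"
  shows "f p \<le> (\<Sum>k\<in>{0..n}. lam k p * f (x k))"
proof -
  have "f (\<Sum>k\<in>{0..n}. lam k p *\<^sub>R x k) \<le> (\<Sum>k\<in>{0..n}. lam k p * f (x k))"
    by (rule convex_on_sum[OF _ _ cvx]) (use p lam_nonneg x_in_Delta sum1 in auto)
  then show ?thesis by (simp add: sumx)
qed

definition "Mf f = Max ((\<lambda>k. f (x k)) ` {0..n})"

lemma f_le_M:
  assumes cvx: "convex_on Delta f" and p: "p \<in> Delta"
  shows "f p \<le> Mf f"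
proof -
  have "f p \<le> (\<Sum>k\<in>{0..n}. lam k p * f (x k))" by (rule jensen_coords[OF cvx p])
  also have "\<dots> \<le> (\<Sum>k\<in>{0..n}. lam k p * Mf f)"
    by (rule sum_mono, rule mult_left_mono) (use p lam_nonneg in \<open>auto simp: Mf_def\<close>)
  also have "\<dots> = Mf f" by (simp add: sum_distrib_right[symmetric] sum1)
  finally show ?thesis .
qed

definition "bc = (\<Sum>k\<in>{0..n}. (1 / real (n + 1)) *\<^sub>R x k)"

lemma lam_bc: "k \<le> n \<Longrightarrow> lam k bc = 1 / real (n + 1)"
  unfolding bc_def by (rule lam_comb) auto

lemma bc_in: "bc \<in> Delta" using lam_bc by (simp add: Delta_eq)

lemma f_ge:
  assumes cvx: "convex_on Delta f" and p: "p \<in> Delta"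
  shows "real (n + 1) * f bc - real n * Mf f \<le> f p"
proof -
  define N where "N = real (n + 1)"
  have N1: "N > 1" using n_pos by (simp add: N_def)
  define r where "r = (N / (N - 1)) *\<^sub>R bc + (1 - N / (N - 1)) *\<^sub>R p"
  have lr: "lam k r = (1 - lam k p) / (N - 1)" if "k \<le> n" for k
  proof -
    have "lam k r = N / (N - 1) * lam k bc + (1 - N / (N - 1)) * lam k p"
      unfolding r_def by (rule lam_affine) simp
    also have "lam k bc = 1 / N" using that by (simp add: lam_bc N_def)
    also have "N / (N - 1) * (1 / N) + (1 - N / (N - 1)) * lam k p = (1 - lam k p) / (N - 1)"
      using N1 by (simp add: field_simps)
    finally show ?thesis .
  qed
  have r: "r \<in> Delta" using lr lam_le1[OF p] N1 by (simp add: Delta_eq)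
  have "bc = (1 - (1 - 1/N)) *\<^sub>R p + (1 - 1/N) *\<^sub>R r"
  proof (rule coord_eq)
    fix k assume k: "k \<le> n"
    have "lam k ((1 - (1 - 1/N)) *\<^sub>R p + (1 - 1/N) *\<^sub>R r) = (1 - (1 - 1/N)) * lam k p + (1 - 1/N) * lam k r"
      by (rule lam_affine) simp
    also have "\<dots> = 1 / N" using N1 k by (simp add: lr field_simps)
    finally show "lam k bc = lam k ((1 - (1 - 1/N)) *\<^sub>R p + (1 - 1/N) *\<^sub>R r)"
      using k by (simp add: lam_bc N_def)
  qed
  then have "f bc \<le> (1 - (1 - 1/N)) * f p + (1 - 1/N) * f r"
    using convex_onD[OF cvx, of "1 - 1/N" p r] N1 p r by simp
  also have "\<dots> \<le> (1/N) * f p + (1 - 1/N) * Mf f"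
    using f_le_M[OF cvx r] N1 by (simp add: mult_left_mono)
  finally have "N * f bc \<le> f p + (N - 1) * Mf f" using N1 by (simp add: field_simps)
  then show ?thesis by (simp add: N_def algebra_simps)
qed

lemma f_bounded:
  assumes cvx: "convex_on Delta f"
  obtains B where "\<And>p. p \<in> Delta \<Longrightarrow> \<bar>f p\<bar> \<le> B"
proof
  fix p assume p: "p \<in> Delta"
  show "\<bar>f p\<bar> \<le> \<bar>Mf f\<bar> + \<bar>real (n + 1) * f bc - real n * Mf f\<bar>"
    using f_le_M[OF cvx p] f_ge[OF cvx p] by linarith
qed

end

context bary begin

lemma lam_lip: obtains B where "B > 0" "\<And>k p q. k \<le> n \<Longrightarrow> \<bar>lam k q - lam k p\<bar> \<le> B * dist q p"
proof -
  have "\<exists>B>0. \<forall>v. norm (lam k v - lam k 0) \<le> B * norm v" for k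
    using linear_bounded_pos[OF lin[of k]] by metis
  then obtain Bk where Bk: "\<And>k. Bk k > 0" "\<And>k v. norm (lam k v - lam k 0) \<le> Bk k * norm v"
    by metis
  show ?thesis
  proof
    show "(\<Sum>k\<in>{0..n}. Bk k) > 0" using Bk(1) by (intro sum_pos) auto
    fix k p q assume k: "k \<le> n"
    have "\<bar>lam k q - lam k p\<bar> = norm (lam k (q - p) - lam k 0)" by (simp add: ell_diff)
    also have "\<dots> \<le> Bk k * norm (q - p)" by (rule Bk(2))
    also have "\<dots> \<le> (\<Sum>k\<in>{0..n}. Bk k) * dist q p"
      unfolding dist_norm
      by (rule mult_right_mono, rule member_le_sum) (use k Bk(1) in \<open>auto intro: less_imp_le\<close>)
    finally show "\<bar>lam k q - lam k p\<bar> \<le> (\<Sum>k\<in>{0..n}. Bk k) * dist q p" .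
  qed
qed

lemma f_usc:
  assumes cvx: "convex_on Delta f" and p: "p \<in> Delta" and a: "f p < a"
  shows "\<exists>e>0. \<forall>q\<in>Delta. dist q p < e \<longrightarrow> f q < a"
proof -
  obtain B where B: "B > 0" "\<And>k p q. k \<le> n \<Longrightarrow> \<bar>lam k q - lam k p\<bar> \<le> B * dist q p"
    using lam_lip by blast
  define P where "P = {k\<in>{0..n}. 0 < lam k p}"
  have "P \<noteq> {}"
  proof
    assume "P = {}"
    then have "\<forall>k\<in>{0..n}. lam k p = 0" using lam_nonneg[OF p] by (force simp: P_def)
    then show False using sum1[of p] by simp
  qed
  define m where "m = Min ((\<lambda>k. lam k p) ` P)"
  have finP: "finite P" by (simp add: P_def)
  have m_pos: "m > 0" unfolding m_def using finP \<open>P \<noteq> {}\<close> by (auto simp: P_def)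
  have m_le: "m \<le> lam k p" if "k \<in> P" for k unfolding m_def using finP that by auto
  define K where "K = Mf f - f p"
  have K0: "K \<ge> 0" using f_le_M[OF cvx p] by (simp add: K_def)
  define \<eta> where "\<eta> = min 1 ((a - f p) / (K + 1))"
  have eta: "\<eta> > 0" using a K0 by (simp add: \<eta>_def)
  define e where "e = m * \<eta> / (real (n + 1) * B)"
  have e: "e > 0" using m_pos eta B by (simp add: e_def)
  show ?thesis
  proof (intro exI conjI ballI impI)
    show "e > 0" by (rule e)
    fix q assume q: "q \<in> Delta" and d: "dist q p < e"
    define \<delta> where "\<delta> = (\<Sum>k\<in>{0..n}. \<bar>lam k q - lam k p\<bar>)"
    have dk: "\<bar>lam k q - lam k p\<bar> \<le> \<delta>" if "k \<le> n" for k
      unfolding \<delta>_def by (rule member_le_sum[of k "{0..n}" "\<lambda>k. \<bar>lam k q - lam k p\<bar>"]) (use that in auto)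
    have "\<delta> \<le> (\<Sum>k\<in>{0..n}. B * dist q p)" unfolding \<delta>_def by (rule sum_mono) (use B in auto)
    also have "\<dots> = real (n + 1) * B * dist q p" by simp
    also have "\<dots> < real (n + 1) * B * e" using d B by simp
    also have "\<dots> = m * \<eta>" using B by (simp add: e_def)
    finally have dlt: "\<delta> < m * \<eta>" .
    define s where "s = \<delta> / m"
    have s0: "s \<ge> 0" using m_pos by (simp add: s_def \<delta>_def)
    have sl: "s < \<eta>" using dlt m_pos by (simp add: s_def field_simps mult.commute)
    show "f q < a"
    proof (cases "s = 0")
      case True
      then have "\<delta> = 0" using m_pos by (simp add: s_def)
      then have "q = p" using dk by (intro coord_eq) force
      then show ?thesis using a by simp
    next
      case False
      then have sp: "s > 0" using s0 by simp
      have s1: "s < 1" using sl by (simp add: \<eta>_def)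
      define r where "r = (1 / s) *\<^sub>R q + (1 - 1 / s) *\<^sub>R p"
      have lr: "lam k r = (1 / s) * lam k q + (1 - 1 / s) * lam k p" for k
        unfolding r_def by (rule lam_affine) simp
      have r: "r \<in> Delta"
        unfolding Delta_eq
      proof (intro CollectI allI impI)
        fix k assume k: "k \<le> n"
        have "0 \<le> lam k q - (1 - s) * lam k p"
        proof (cases "k \<in> P")
          case True
          have "s * lam k p \<ge> s * m" using m_le[OF True] sp by simp
          also have "s * m = \<delta>" using m_pos by (simp add: s_def)
          finally show ?thesis using dk[OF k] by (simp add: algebra_simps abs_le_iff)
        next
          case False
          then have "lam k p = 0" using lam_nonneg[OF p k] k by (simp add: P_def)
          then show ?thesis using lam_nonneg[OF q k] by simp
        qed
        then have "0 \<le> (1 / s) * (lam k q - (1 - s) * lam k p)" using sp by simp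
        also have "(1 / s) * (lam k q - (1 - s) * lam k p) = lam k r"
          using sp by (simp add: lr field_simps)
        finally show "0 \<le> lam k r" .
      qed
      have qeq: "q = (1 - s) *\<^sub>R p + s *\<^sub>R r"
      proof (rule coord_eq)
        fix k assume k: "k \<le> n"
        have "lam k ((1 - s) *\<^sub>R p + s *\<^sub>R r) = (1 - s) * lam k p + s * lam k r"
          by (rule lam_affine) simp
        also have "\<dots> = lam k q" using sp by (simp add: lr field_simps)
        finally show "lam k q = lam k ((1 - s) *\<^sub>R p + s *\<^sub>R r)" by simp
      qed
      have "f q \<le> (1 - s) * f p + s * f r"
        using convex_onD[OF cvx, of s p r] s0 s1 p r qeq by simp
      also have "\<dots> \<le> (1 - s) * f p + s * Mf f"
        using f_le_M[OF cvx r] s0 by (simp add: mult_left_mono)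
      also have "\<dots> = f p + s * K" by (simp add: K_def algebra_simps)
      also have "s * K \<le> \<eta> * K" using sl K0 by (simp add: mult_right_mono)
      also have "\<eta> * K \<le> (a - f p) / (K + 1) * K" using K0 by (intro mult_right_mono) (auto simp: \<eta>_def)
      also have "(a - f p) / (K + 1) * K < a - f p"
        using K0 a by (simp add: field_simps)
      finally show ?thesis by simp
    qed
  qed
qed

end

context bary begin

lemma closed_Delta: "closed Delta" using compact_Delta by (rule compact_imp_closed)

lemma f_meas:
  assumes cvx: "convex_on Delta f"
  shows "(\<lambda>p. indicator Delta p *\<^sub>R f p) \<in> borel_measurable lborel"
  unfolding borel_measurable_iff_less
proof
  fix a :: real
  have "openin (top_of_set Delta) {w\<in>Delta. f w < a}"
    unfolding openin_euclidean_subtopology_iff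
    using f_usc[OF cvx] by blast
  then obtain U where U: "open U" "{w\<in>Delta. f w < a} = Delta \<inter> U"
    by (auto simp: openin_open)
  have "{w \<in> space lborel. indicator Delta w *\<^sub>R f w < a}
      = (if 0 < a then - Delta else {}) \<union> (Delta \<inter> U)"
    using U(2) by (auto simp: indicator_def split: if_splits)
  also have "\<dots> \<in> sets borel"
    using closed_Delta U(1) by (auto intro!: borel_closed borel_open sets.Un sets.Int)
  finally show "{w \<in> space lborel. indicator Delta w *\<^sub>R f w < a} \<in> sets lborel" by simp
qed

lemma f_integrable:
  assumes cvx: "convex_on Delta f"
  shows "set_integrable lborel Delta f"
proof -
  obtain B where B: "\<And>p. p \<in> Delta \<Longrightarrow> \<bar>f p\<bar> \<le> B" using f_bounded[OF cvx] by blast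
  show ?thesis
    unfolding set_integrable_def
  proof (rule integrableI_bounded_set[where A=Delta and B=B])
    show "Delta \<in> sets lborel" using closed_Delta by simp
    show "emeasure lborel Delta < \<infinity>" using compact_Delta by (rule emeasure_compact_finite)
    show "(\<lambda>p. indicator Delta p *\<^sub>R f p) \<in> borel_measurable lborel" by (rule f_meas[OF cvx])
    show "AE x\<in>Delta in lborel. norm (indicator Delta x *\<^sub>R f x) \<le> B" using B by auto
    show "AE x in lborel. x \<notin> Delta \<longrightarrow> indicator Delta x *\<^sub>R f x = 0" by auto
  qed
qed

lemma Avg_eq:
  assumes cvx: "convex_on Delta f"
  shows "Avg f Delta = integral Delta f / V" "f integrable_on Delta"
proof -
  have m: "measure lborel Delta = V" unfolding V_def using closed_Delta
    by (simp add: measure_completion)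
  show "Avg f Delta = integral Delta f / V"
    unfolding Avg_def m using set_borel_integral_eq_integral(2)[OF f_integrable[OF cvx]] by simp
  show "f integrable_on Delta" using set_borel_integral_eq_integral(1)[OF f_integrable[OF cvx]] .
qed

end

lemma sym_sum:
  fixes G :: "nat \<Rightarrow> nat \<Rightarrow> real"
  assumes "\<And>i j. G i j = G j i"
  shows "(\<Sum>i<N. \<Sum>j<N. G i j) = (\<Sum>i<N. G i i) + 2 * (\<Sum>j<N. \<Sum>i<j. G i j)"
proof (induction N)
  case 0 then show ?case by simp
next
  case (Suc N)
  have "(\<Sum>i<Suc N. \<Sum>j<Suc N. G i j) = (\<Sum>i<N. \<Sum>j<N. G i j) + (\<Sum>i<N. G i N) + (\<Sum>j<N. G N j) + G N N"
    by (simp add: sum.distrib)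
  also have "(\<Sum>j<N. G N j) = (\<Sum>i<N. G i N)" using assms by simp
  finally show ?case using Suc by simp
qed

lemma sum_prod_fst_snd:
  "(\<Sum>ij\<in>A \<times> B. h (fst ij) (snd ij)) = (\<Sum>i\<in>A. \<Sum>j\<in>B. h i j)"
  by (simp add: sum.cartesian_product split_beta)

lemma sym_comb:
  fixes W :: "nat \<Rightarrow> nat \<Rightarrow> real" and y :: "nat \<Rightarrow> 'a::real_vector"
  assumes "\<And>i j. W i j = W j i"
  shows "(\<Sum>i\<in>A. \<Sum>j\<in>A. W i j *\<^sub>R ((y i + y j) /\<^sub>R 2)) = (\<Sum>i\<in>A. (\<Sum>j\<in>A. W i j) *\<^sub>R y i)"
proof -
  have e: "W i j *\<^sub>R ((y i + y j) /\<^sub>R 2) = (1/2::real) *\<^sub>R (W i j *\<^sub>R y i) + (1/2::real) *\<^sub>R (W i j *\<^sub>R y j)" for i j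
    by (simp add: scaleR_add_right)
  have "(\<Sum>i\<in>A. \<Sum>j\<in>A. W i j *\<^sub>R ((y i + y j) /\<^sub>R 2))
      = (1/2::real) *\<^sub>R (\<Sum>i\<in>A. \<Sum>j\<in>A. W i j *\<^sub>R y i) + (1/2::real) *\<^sub>R (\<Sum>i\<in>A. \<Sum>j\<in>A. W i j *\<^sub>R y j)"
    unfolding e sum.distrib scaleR_sum_right ..
  also have "(\<Sum>i\<in>A. \<Sum>j\<in>A. W i j *\<^sub>R y j) = (\<Sum>i\<in>A. \<Sum>j\<in>A. W j i *\<^sub>R y j)"
    using assms by simp
  also have "\<dots> = (\<Sum>i\<in>A. \<Sum>j\<in>A. W i j *\<^sub>R y i)"
    by (rule sum.swap)
  finally have "(\<Sum>i\<in>A. \<Sum>j\<in>A. W i j *\<^sub>R ((y i + y j) /\<^sub>R 2)) = (\<Sum>i\<in>A. \<Sum>j\<in>A. W i j *\<^sub>R y i)"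
    by (simp add: scaleR_add_left[symmetric])
  also have "\<dots> = (\<Sum>i\<in>A. (\<Sum>j\<in>A. W i j) *\<^sub>R y i)"
    by (simp add: scaleR_sum_left)
  finally show ?thesis .
qed

context bary begin

definition Wt :: "real \<Rightarrow> (real,'m) vec \<Rightarrow> nat \<Rightarrow> nat \<Rightarrow> real" where
  "Wt c p i j = (if i = j then lam i p - (c/2) * (\<Sum>k\<in>{0..n}-{i}. min (lam i p) (lam k p))
                 else (c/2) * min (lam i p) (lam j p))"

lemma Wt_sym: "Wt c p i j = Wt c p j i"
  by (simp add: Wt_def min.commute)

lemma Wt_row:
  assumes "i \<le> n"
  shows "(\<Sum>j\<in>{0..n}. Wt c p i j) = lam i p"
proof -
  have "(\<Sum>j\<in>{0..n}. Wt c p i j) = Wt c p i i + (\<Sum>j\<in>{0..n}-{i}. Wt c p i j)"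
    using assms by (intro sum.remove) auto
  also have "(\<Sum>j\<in>{0..n}-{i}. Wt c p i j) = (\<Sum>j\<in>{0..n}-{i}. (c/2) * min (lam i p) (lam j p))"
    by (rule sum.cong) (auto simp: Wt_def)
  finally show ?thesis by (simp add: Wt_def sum_distrib_left)
qed

lemma Wt_nonneg:
  fixes c :: real
  assumes "p \<in> Delta" "i \<le> n" "j \<le> n" "0 \<le> c" "c * real n \<le> 2"
  shows "0 \<le> Wt c p i j"
proof (cases "i = j")
  case True
  have "(\<Sum>k\<in>{0..n}-{i}. min (lam i p) (lam k p)) \<le> (\<Sum>k\<in>{0..n}-{i}. lam i p)"
    by (rule sum_mono) simp
  also have "\<dots> = n * lam i p" using assms(2) by simp
  finally have "(c/2) * (\<Sum>k\<in>{0..n}-{i}. min (lam i p) (lam k p)) \<le> (c/2) * (n * lam i p)"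
    using assms(4) by (simp add: mult_left_mono)
  also have "\<dots> = (c * n / 2) * lam i p" by simp
  also have "\<dots> \<le> 1 * lam i p"
    using assms lam_nonneg[OF assms(1,2)] by (intro mult_right_mono) auto
  finally show ?thesis using True by (simp add: Wt_def)
next
  case False
  then show ?thesis using assms lam_nonneg[OF assms(1)] by (simp add: Wt_def)
qed

lemma Wt_total: "(\<Sum>i\<in>{0..n}. \<Sum>j\<in>{0..n}. Wt c p i j) = 1"
  by (simp add: Wt_row sum1)

lemma Wt_comb: "(\<Sum>i\<in>{0..n}. \<Sum>j\<in>{0..n}. Wt c p i j *\<^sub>R ((x i + x j) /\<^sub>R 2)) = p"
proof -
  have "(\<Sum>i\<in>{0..n}. \<Sum>j\<in>{0..n}. Wt c p i j *\<^sub>R ((x i + x j) /\<^sub>R 2))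
     = (\<Sum>i\<in>{0..n}. (\<Sum>j\<in>{0..n}. Wt c p i j) *\<^sub>R x i)"
    by (rule sym_comb) (rule Wt_sym)
  also have "\<dots> = (\<Sum>i\<in>{0..n}. lam i p *\<^sub>R x i)"
    by (rule sum.cong) (auto simp: Wt_row)
  finally show ?thesis by (simp add: sumx)
qed

lemma mid_in: "i \<le> n \<Longrightarrow> j \<le> n \<Longrightarrow> (x i + x j) /\<^sub>R 2 \<in> Delta"
proof -
  assume "i \<le> n" "j \<le> n"
  have "(1/2::real) *\<^sub>R x i + (1/2::real) *\<^sub>R x j \<in> Delta"
    using convexD[OF _ x_in_Delta[OF \<open>i \<le> n\<close>] x_in_Delta[OF \<open>j \<le> n\<close>], of "1/2" "1/2"]
    unfolding Delta_def by (simp add: convex_convex_hull)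
  moreover have "(x i + x j) /\<^sub>R 2 = (1/2::real) *\<^sub>R x i + (1/2::real) *\<^sub>R x j"
    by (simp add: scaleR_add_right)
  ultimately show ?thesis by simp
qed

lemma Wt_jensen:
  fixes c :: real
  assumes cvx: "convex_on Delta f" and p: "p \<in> Delta" and c: "0 \<le> c" "c * real n \<le> 2"
  shows "f p \<le> (\<Sum>i\<in>{0..n}. \<Sum>j\<in>{0..n}. Wt c p i j * f ((x i + x j) /\<^sub>R 2))"
proof -
  let ?S = "{0..n} \<times> {0..n}"
  let ?a = "\<lambda>ij. Wt c p (fst ij) (snd ij)"
  let ?y = "\<lambda>ij. (x (fst ij) + x (snd ij)) /\<^sub>R 2"
  have fin: "finite ?S" by simp
  have ne: "?S \<noteq> {}" by simp
  have tot: "sum ?a ?S = 1"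
    using Wt_total[of c p] unfolding sum_prod_fst_snd[where h="Wt c p"] .
  have nn: "0 \<le> ?a ij" if "ij \<in> ?S" for ij
    using that Wt_nonneg[OF p _ _ c, of "fst ij" "snd ij"] by (simp add: mem_Times_iff)
  have mem: "?y ij \<in> Delta" if "ij \<in> ?S" for ij
    using that mid_in[of "fst ij" "snd ij"] by (simp add: mem_Times_iff)
  have "f (\<Sum>ij\<in>?S. ?a ij *\<^sub>R ?y ij) \<le> (\<Sum>ij\<in>?S. ?a ij * f (?y ij))"
    by (rule convex_on_sum[OF fin ne cvx tot nn mem])
  moreover have "(\<Sum>ij\<in>?S. ?a ij *\<^sub>R ?y ij) = p"
    using Wt_comb[of c p] unfolding sum_prod_fst_snd[where h="\<lambda>i j. Wt c p i j *\<^sub>R ((x i + x j) /\<^sub>R 2)"] .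
  moreover have "(\<Sum>ij\<in>?S. ?a ij * f (?y ij)) = (\<Sum>i\<in>{0..n}. \<Sum>j\<in>{0..n}. Wt c p i j * f ((x i + x j) /\<^sub>R 2))"
    by (rule sum_prod_fst_snd)
  ultimately show ?thesis by simp
qed

end

lemma choose2_real: "real ((m + 1) choose 2) = real (m + 1) * real m / 2"
proof (induction m)
  case 0 then show ?case by simp
next
  case (Suc m)
  have "((Suc m + 1) choose 2) = ((m + 1) choose 1) + ((m + 1) choose 2)"
    by (simp add: numeral_2_eq_2)
  then show ?case using Suc by (simp add: field_simps)
qed

lemma ceil_half: "real_of_int \<lceil>real N / 2\<rceil> = real N - real (N div 2)"
proof -
  define m where "m = N div 2"
  define r where "r = N mod 2"
  have N: "N = 2 * m + r" by (simp add: m_def r_def)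
  have r: "r = 0 \<or> r = 1" by (auto simp: r_def)
  have "\<lceil>real N / 2\<rceil> = int (m + r)"
  proof (rule ceiling_unique)
    show "real_of_int (int (m + r)) - 1 < real N / 2" using r N by auto
    show "real N / 2 \<le> real_of_int (int (m + r))" using r N by auto
  qed
  moreover have "N div 2 = m" by (simp add: m_def)
  ultimately show ?thesis using N r by auto
qed

context bary begin

lemma Wt_cont: "continuous_on UNIV (\<lambda>p. Wt c p i j)"
  unfolding Wt_def by (cases "i = j") (auto intro!: continuous_intros lam_cont)

lemma int_Wt:
  assumes "i \<le> n" "j \<le> n"
  shows "integral Delta (\<lambda>p. Wt c p i j) =
    (if i = j then V / (n + 1) - (c/2) * n * (V / (2 * (n + 1))) else (c/2) * (V / (2 * (n + 1))))"
proof (cases "i = j")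
  case False
  have "integral Delta (\<lambda>p. Wt c p i j) = integral Delta (\<lambda>p. (c/2) * min (lam i p) (lam j p))"
    using False by (simp add: Wt_def)
  also have "\<dots> = (c/2) * (V / (2 * (n + 1)))"
    using int_min[OF assms False] by (simp add: integral_mult_right)
  finally show ?thesis using False by simp
next
  case True
  have im: "(\<lambda>p. min (lam i p) (lam k p)) integrable_on Delta" for k
    by (rule int_cont[OF compact_Delta]) (intro continuous_intros lam_cont)
  have "integral Delta (\<lambda>p. Wt c p i j)
      = integral Delta (\<lambda>p. lam i p - (c/2) * (\<Sum>k\<in>{0..n}-{i}. min (lam i p) (lam k p)))"
    using True by (simp add: Wt_def)
  also have "\<dots> = integral Delta (lam i) - integral Delta (\<lambda>p. (c/2) * (\<Sum>k\<in>{0..n}-{i}. min (lam i p) (lam k p)))"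
    by (rule integral_diff) (auto intro!: int_cont[OF compact_Delta] continuous_intros lam_cont)
  also have "integral Delta (\<lambda>p. (c/2) * (\<Sum>k\<in>{0..n}-{i}. min (lam i p) (lam k p)))
      = (c/2) * (\<Sum>k\<in>{0..n}-{i}. integral Delta (\<lambda>p. min (lam i p) (lam k p)))"
    by (simp add: integral_mult_right integral_sum im)
  also have "(\<Sum>k\<in>{0..n}-{i}. integral Delta (\<lambda>p. min (lam i p) (lam k p)))
      = (\<Sum>k\<in>{0..n}-{i}. V / (2 * (n + 1)))"
  proof (rule sum.cong)
    fix k assume "k \<in> {0..n}-{i}"
    then show "integral Delta (\<lambda>p. min (lam i p) (lam k p)) = V / (2 * (n + 1))"
      using assms by (intro int_min) auto
  qed simp
  also have "\<dots> = n * (V / (2 * (n + 1)))" using assms by simp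
  finally show ?thesis using True int_lam[OF assms(1)] by simp
qed

end

context bary begin

theorem main:
  assumes cvx: "convex_on Delta f"
  shows "Avg f Delta \<le>
      (real ((n + 1) div 2) / real (n + 1)) *
        ((1 / real ((n + 1) choose 2)) *
          (\<Sum>j\<in>{0..n}. \<Sum>i\<in>{0..<j}. f ((x i + x j) /\<^sub>R 2)))
    + (real_of_int \<lceil>real (n + 1) / 2\<rceil> / real (n + 1)) *
        ((\<Sum>i\<in>{0..n}. f (x i)) / real (n + 1))"
proof -
  define fl where "fl = real ((n + 1) div 2)"
  define c where "c = 4 * fl / (real (n + 1) * real n)"
  have npos: "real n > 0" using n_pos by simp
  have c0: "0 \<le> c" by (simp add: c_def fl_def)
  have "2 * ((n + 1) div 2) \<le> n + 1" by simp
  then have fl2: "2 * fl \<le> real (n + 1)" unfolding fl_def by linarith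
  have cn: "c * real n = 4 * fl / real (n + 1)" using npos by (simp add: c_def)
  have cn2: "c * real n \<le> 2" unfolding cn using fl2 by (simp add: field_simps)
  define A where "A = V / (n + 1) - (c/2) * n * (V / (2 * (n + 1)))"
  define Bc where "Bc = (c/2) * (V / (2 * (n + 1)))"
  define m where "m = (\<lambda>i j. (x i + x j) /\<^sub>R 2)"
  define G where "G = (\<lambda>i j. integral Delta (\<lambda>p. Wt c p i j) * f (m i j))"
  have cW: "continuous_on UNIV (\<lambda>p. \<Sum>i\<in>{0..n}. \<Sum>j\<in>{0..n}. Wt c p i j * f (m i j))"
    by (intro continuous_intros Wt_cont)
  have "integral Delta f \<le> integral Delta (\<lambda>p. \<Sum>i\<in>{0..n}. \<Sum>j\<in>{0..n}. Wt c p i j * f (m i j))"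
    by (rule integral_le[OF Avg_eq(2)[OF cvx] int_cont[OF compact_Delta cW]])
       (use Wt_jensen[OF cvx _ c0 cn2] in \<open>simp add: m_def\<close>)
  also have "\<dots> = (\<Sum>i\<in>{0..n}. integral Delta (\<lambda>p. \<Sum>j\<in>{0..n}. Wt c p i j * f (m i j)))"
    by (rule integral_sum) (auto intro!: int_cont[OF compact_Delta] continuous_intros Wt_cont)
  also have "\<dots> = (\<Sum>i\<in>{0..n}. \<Sum>j\<in>{0..n}. G i j)"
  proof (rule sum.cong)
    fix i assume "i \<in> {0..n}"
    show "integral Delta (\<lambda>p. \<Sum>j\<in>{0..n}. Wt c p i j * f (m i j)) = (\<Sum>j\<in>{0..n}. G i j)"
      unfolding G_def
      by (subst integral_sum) (auto intro!: int_cont[OF compact_Delta] continuous_intros Wt_cont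
          simp: integral_mult_left)
  qed simp
  also have "\<dots> = (\<Sum>i<Suc n. \<Sum>j<Suc n. G i j)"
    by (simp add: atLeast0AtMost lessThan_Suc_atMost)
  also have "\<dots> = (\<Sum>i<Suc n. G i i) + 2 * (\<Sum>j<Suc n. \<Sum>i<j. G i j)"
    by (rule sym_sum) (simp add: G_def Wt_sym m_def add.commute)
  also have "(\<Sum>i<Suc n. G i i) = A * (\<Sum>i\<in>{0..n}. f (x i))"
    unfolding sum_distrib_left
    by (rule sum.cong) (auto simp: G_def int_Wt A_def m_def scaleR_2 simp flip: lessThan_Suc_atMost atLeast0AtMost)
  also have "(\<Sum>j<Suc n. \<Sum>i<j. G i j) = Bc * (\<Sum>j\<in>{0..n}. \<Sum>i\<in>{0..<j}. f (m i j))"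
    unfolding sum_distrib_left
    by (rule sum.cong) (auto intro!: sum.cong simp: G_def int_Wt Bc_def
        simp flip: lessThan_Suc_atMost atLeast0AtMost atLeast0LessThan)
  finally have I: "integral Delta f \<le> A * (\<Sum>i\<in>{0..n}. f (x i)) + 2 * (Bc * (\<Sum>j\<in>{0..n}. \<Sum>i\<in>{0..<j}. f (m i j)))" .
  have V0: "V > 0" by (rule V_gt0)
  have Nn: "real n + 1 = real (n + 1)" by simp
  have "(c/2) * n * (V / (2 * (n + 1))) = (c * real n) * V / (4 * real (n + 1))"
    by (simp add: field_simps)
  also have "\<dots> = fl * V / (real (n + 1) * real (n + 1))"
  proof -
    have "\<And>N::real. N > 0 \<Longrightarrow> (4 * fl / N) * V / (4 * N) = fl * V / (N * N)"
      by (simp add: field_simps)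
    from this[of "real (n + 1)"] show ?thesis unfolding cn by simp
  qed
  finally have A2: "A = V / real (n + 1) - fl * V / (real (n + 1) * real (n + 1))"
    unfolding A_def by (simp only: Nn)
  have eA: "A / V = real_of_int \<lceil>real (n + 1) / 2\<rceil> / real (n + 1) * (1 / real (n + 1))"
  proof -
    have "\<And>N::real. N > 0 \<Longrightarrow> (V / N - fl * V / (N * N)) / V = (N - fl) / N * (1 / N)"
      using V0 by (simp add: field_simps)
    from this[of "real (n + 1)"] show ?thesis unfolding ceil_half A2 fl_def by simp
  qed
  have eB: "2 * Bc / V = real ((n + 1) div 2) / real (n + 1) * (1 / real ((n + 1) choose 2))"
  proof -
    have "\<And>N k::real. N > 0 \<Longrightarrow> k > 0 \<Longrightarrow>
       2 * ((4 * fl / (N * k)) / 2 * (V / (2 * N))) / V = fl / N * (1 / (N * k / 2))"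
      using V0 by (simp add: field_simps)
    from this[of "real (n + 1)" "real n"] npos show ?thesis
      unfolding choose2_real Bc_def c_def by (simp only: Nn fl_def) simp
  qed
  have "Avg f Delta = integral Delta f / V" by (rule Avg_eq(1)[OF cvx])
  also have "\<dots> \<le> (A * (\<Sum>i\<in>{0..n}. f (x i)) + 2 * (Bc * (\<Sum>j\<in>{0..n}. \<Sum>i\<in>{0..<j}. f (m i j)))) / V"
    using I V0 by (simp add: divide_right_mono)
  also have "\<dots> = (A / V) * (\<Sum>i\<in>{0..n}. f (x i)) + (2 * Bc / V) * (\<Sum>j\<in>{0..n}. \<Sum>i\<in>{0..<j}. f (m i j))"
    by (simp add: add_divide_distrib)
  also have "\<dots> = (real ((n + 1) div 2) / real (n + 1)) *
        ((1 / real ((n + 1) choose 2)) *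
          (\<Sum>j\<in>{0..n}. \<Sum>i\<in>{0..<j}. f ((x i + x j) /\<^sub>R 2)))
    + (real_of_int \<lceil>real (n + 1) / 2\<rceil> / real (n + 1)) *
        ((\<Sum>i\<in>{0..n}. f (x i)) / real (n + 1))"
    unfolding eA eB m_def by simp
  finally show ?thesis .
qed

end

lemma bary_exists:
  fixes x :: "nat \<Rightarrow> (real,'m::finite) vec"
  assumes nd: "n = CARD('m)" and inj: "inj_on x {0..n}" and aff: "\<not> affine_dependent (x ` {0..n})"
  obtains lam :: "nat \<Rightarrow> (real,'m) vec \<Rightarrow> real" where
    "\<And>k. linear (\<lambda>p. lam k p - lam k 0)"
    "\<And>k j. k \<le> n \<Longrightarrow> j \<le> n \<Longrightarrow> lam k (x j) = (if k = j then 1 else 0)"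
    "\<And>p. (\<Sum>k\<in>{0..n}. lam k p) = 1"
    "\<And>p. (\<Sum>k\<in>{0..n}. lam k p *\<^sub>R x k) = p"
proof -
  define B where "B = (\<lambda>k. x k - x 0) ` {1..n}"
  have inj1: "inj_on (\<lambda>k. x k - x 0) {1..n}"
    using inj by (auto simp: inj_on_def)
  have x0: "x 0 \<notin> x ` {1..n}"
  proof
    assume "x 0 \<in> x ` {1..n}"
    then obtain k where k: "k \<in> {1..n}" "x 0 = x k" by auto
    then have "0 = k" by (intro inj_onD[OF inj]) auto
    then show False using k by simp
  qed
  have "{0..n} = insert 0 {1..n}" by auto
  then have ins: "x ` {0..n} = insert (x 0) (x ` {1..n})" by simp
  have "\<not> dependent ((+) (- x 0) ` (x ` {1..n}))"
    using aff unfolding ins affine_dependent_iff_dependent[OF x0] .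
  moreover have "(+) (- x 0) ` (x ` {1..n}) = B" unfolding B_def by (auto simp: image_iff)
  ultimately have indB: "independent B" by simp
  have cardB: "card B = n" unfolding B_def using card_image[OF inj1] by simp
  have "dim B = card B" using indB by (rule dim_eq_card_independent)
  then have "dim B = DIM((real,'m) vec)" using cardB nd by simp
  then have spB: "span B = UNIV" using dim_eq_full by blast
  define R where "R = (\<lambda>k v. representation B v (x k - x 0))"
  have linR: "linear (R k)" for k unfolding R_def by (rule bounded_linear.linear[OF bounded_linear_representation[OF indB spB]])
  define lam where "lam = (\<lambda>k p. if k = 0 then 1 - (\<Sum>j\<in>{1..n}. R j (p - x 0))
                                   else if k \<le> n then R k (p - x 0) else 0)"
  have Rd: "R k (p - x 0) - R k (0 - x 0) = R k p" for k p
  proof -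
    have "R k (0 - x 0) = - R k (x 0)" using linear_diff[OF linR[of k], of 0 "x 0"] by (simp add: linear_0[OF linR])
    moreover have "R k (p - x 0) = R k p - R k (x 0)" by (rule linear_diff[OF linR])
    ultimately show ?thesis by simp
  qed
  show ?thesis
  proof
    fix k
    show "linear (\<lambda>p. lam k p - lam k 0)"
    proof (cases "k = 0")
      case True
      have "(\<lambda>p. lam k p - lam k 0) = (\<lambda>p. - (\<Sum>j\<in>{1..n}. R j p))"
        using True by (auto simp: lam_def fun_eq_iff sum_subtractf[symmetric] linear_diff[OF linR] algebra_simps
            linear_0[OF linR] sum_negf)
      moreover have "linear (\<lambda>p. - (\<Sum>j\<in>{1..n}. R j p))"
        by (intro linear_compose_neg linear_compose_sum) (auto simp: linR)
      ultimately show ?thesis by simp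
    next
      case False
      show ?thesis
      proof (cases "k \<le> n")
        case True
        have "(\<lambda>p. lam k p - lam k 0) = R k"
          using True False by (auto simp: lam_def fun_eq_iff linear_diff[OF linR] linear_0[OF linR])
        then show ?thesis using linR by simp
      next
        case F2: False
        then have "(\<lambda>p. lam k p - lam k 0) = (\<lambda>p. 0)" using False by (auto simp: lam_def)
        then show ?thesis by (simp add: linear_zero)
      qed
    qed
  next
    fix k j assume kj: "k \<le> n" "j \<le> n"
    have Rx: "R i (x j - x 0) = (if i = j then 1 else 0)" if "1 \<le> i" "i \<le> n" for i
    proof (cases "j = 0")
      case True
      then show ?thesis using that by (simp add: R_def representation_zero)
    next
      case False
      then have jB: "x j - x 0 \<in> B" using kj unfolding B_def by auto
      have "(x i - x 0 = x j - x 0) = (i = j)"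
      proof
        assume "x i - x 0 = x j - x 0"
        then have "x i = x j" by simp
        then show "i = j" by (rule inj_onD[OF inj]) (use that kj in auto)
      qed simp
      then show ?thesis unfolding R_def representation_basis[OF indB jB] by simp
    qed
    show "lam k (x j) = (if k = j then 1 else 0)"
    proof (cases "k = 0")
      case True
      have "(\<Sum>i\<in>{1..n}. R i (x j - x 0)) = (\<Sum>i\<in>{1..n}. if i = j then 1 else 0)"
        by (rule sum.cong) (auto simp: Rx)
      also have "\<dots> = (if j \<in> {1..n} then 1 else 0)" by simp
      finally show ?thesis using True kj by (auto simp: lam_def)
    next
      case False
      then show ?thesis using kj Rx[of k] by (simp add: lam_def)
    qed
  next
    fix p
    have split: "{0..n} = insert 0 {1..n}" by auto
    show "(\<Sum>k\<in>{0..n}. lam k p) = 1"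
      unfolding split by (simp add: lam_def)
    have "(\<Sum>k\<in>{0..n}. lam k p *\<^sub>R x k)
        = (1 - (\<Sum>j\<in>{1..n}. R j (p - x 0))) *\<^sub>R x 0 + (\<Sum>k\<in>{1..n}. R k (p - x 0) *\<^sub>R x k)"
      unfolding split by (simp add: lam_def)
    also have "\<dots> = x 0 + (\<Sum>k\<in>{1..n}. R k (p - x 0) *\<^sub>R (x k - x 0))"
    proof -
      have "(\<Sum>k\<in>{1..n}. R k (p - x 0) *\<^sub>R (x k - x 0))
          = (\<Sum>k\<in>{1..n}. R k (p - x 0) *\<^sub>R x k) - (\<Sum>j\<in>{1..n}. R j (p - x 0)) *\<^sub>R x 0"
        by (simp add: scaleR_diff_right sum_subtractf scaleR_sum_left)
      then show ?thesis by (simp add: scaleR_diff_left)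
    qed
    also have "(\<Sum>k\<in>{1..n}. R k (p - x 0) *\<^sub>R (x k - x 0))
        = (\<Sum>b\<in>B. representation B (p - x 0) b *\<^sub>R b)"
    proof -
      have rB: "\<And>g. (\<Sum>b\<in>B. g b) = (\<Sum>k\<in>{1..n}. g (x k - x 0))"
        unfolding B_def using sum.reindex[OF inj1] by (simp add: o_def)
      show ?thesis unfolding rB R_def ..
    qed
    also have "\<dots> = p - x 0"
      by (rule sum_representation_eq[OF indB]) (simp add: spB, simp add: B_def, simp)
    finally show "(\<Sum>k\<in>{0..n}. lam k p *\<^sub>R x k) = p" by simp
  qed
qed

typedef 'a wo = "UNIV :: 'a set" morphisms Rep_wo Abs_wo by simp

instance wo :: (finite) finite
proof
  have "(UNIV :: 'a wo set) = Abs_wo ` UNIV"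
    by (metis Abs_wo_cases UNIV_I image_iff subsetI subset_antisym)
  then show "finite (UNIV :: 'a wo set)" by (metis finite finite_imageI)
qed

instantiation wo :: (finite) linorder
begin
definition less_eq_wo_def: "a \<le> b \<longleftrightarrow> to_nat (Rep_wo a) \<le> to_nat (Rep_wo b)"
definition less_wo_def: "a < b \<longleftrightarrow> to_nat (Rep_wo a) < to_nat (Rep_wo b)"
instance
proof
  fix a b c :: "'a wo"
  show "(a < b) = (a \<le> b \<and> \<not> b \<le> a)" by (auto simp: less_eq_wo_def less_wo_def)
  show "a \<le> a" by (simp add: less_eq_wo_def)
  show "a \<le> b \<Longrightarrow> b \<le> c \<Longrightarrow> a \<le> c" by (simp add: less_eq_wo_def)
  show "a \<le> b \<Longrightarrow> b \<le> a \<Longrightarrow> a = b"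
    by (simp add: less_eq_wo_def Rep_wo_inject)
  show "a \<le> b \<or> b \<le> a" by (auto simp: less_eq_wo_def)
qed
end

instance wo :: (finite) wellorder
proof -
  have "wf {(x :: 'a wo, y). x < y}"
    by (auto simp add: trancl_def tranclp_less intro!: finite_acyclic_wf acyclicI)
  thus "OFCLASS('a wo, wellorder_class)"
    by (rule wf_wellorderI) intro_classes
qed

lemma card_wo: "CARD('a::finite wo) = CARD('a)"
  using type_definition.card[OF type_definition_wo] by simp

definition to_wo :: "(real,'a::finite) vec \<Rightarrow> (real,'a wo) vec" where
  "to_wo v = (\<chi> i. v $ Rep_wo i)"
definition from_wo :: "(real,'a::finite wo) vec \<Rightarrow> (real,'a) vec" where
  "from_wo w = (\<chi> j. w $ Abs_wo j)"

lemma from_to [simp]: "from_wo (to_wo v) = v"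
  by (simp add: from_wo_def to_wo_def vec_eq_iff Abs_wo_inverse)
lemma to_from [simp]: "to_wo (from_wo w) = w"
  by (simp add: from_wo_def to_wo_def vec_eq_iff Rep_wo_inverse)

lemma linear_to_wo: "linear to_wo"
  by (rule linearI) (simp_all add: to_wo_def vec_eq_iff)
lemma linear_from_wo: "linear from_wo"
  by (rule linearI) (simp_all add: from_wo_def vec_eq_iff)

lemma meas_to_wo: "to_wo \<in> borel_measurable lborel"
  using linear_to_wo
  by (auto intro!: borel_measurable_continuous_onI linear_continuous_on simp: linear_conv_bounded_linear)
lemma meas_from_wo: "from_wo \<in> borel_measurable borel"
  using linear_from_wo
  by (auto intro!: borel_measurable_continuous_onI linear_continuous_on simp: linear_conv_bounded_linear)

lemma Basis_cart_real: "(Basis :: (real,'n::finite) vec set) = range (\<lambda>i. axis i 1)"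
  by (auto simp: Basis_vec_def)

lemma prod_Basis_cart: "(\<Prod>b\<in>(Basis :: (real,'n::finite) vec set). g b) = (\<Prod>i\<in>UNIV. g (axis i 1))"
  unfolding Basis_cart_real
  using prod.reindex[of "\<lambda>i. axis i (1::real)" UNIV g] by (simp add: inj_on_def axis_eq_axis o_def)

lemma distr_to_wo: "distr lborel borel (to_wo :: (real,'a::finite) vec \<Rightarrow> _) = lborel"
proof (rule lborel_eqI[symmetric])
  fix l u :: "(real,'a wo) vec"
  assume lu: "\<And>b. b \<in> Basis \<Longrightarrow> l \<bullet> b \<le> u \<bullet> b"
  have pre: "to_wo -` box l u = box (from_wo l) (from_wo u)"
  proof -
    have "v \<in> to_wo -` box l u \<longleftrightarrow> v \<in> box (from_wo l) (from_wo u)" for v :: "(real,'a) vec"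
    proof
      assume "v \<in> to_wo -` box l u"
      then have "\<forall>i. l $ i < v $ Rep_wo i \<and> v $ Rep_wo i < u $ i" by (simp add: mem_box_cart to_wo_def)
      then show "v \<in> box (from_wo l) (from_wo u)"
        by (auto simp: mem_box_cart from_wo_def Abs_wo_inverse dest: spec[of _ "Abs_wo _"])
    next
      assume "v \<in> box (from_wo l) (from_wo u)"
      then have "\<forall>j. l $ Abs_wo j < v $ j \<and> v $ j < u $ Abs_wo j" by (simp add: mem_box_cart from_wo_def)
      then show "v \<in> to_wo -` box l u"
        by (auto simp: mem_box_cart to_wo_def Rep_wo_inverse dest: spec[of _ "Rep_wo _"])
    qed
    then show ?thesis by auto
  qed
  have le: "\<forall>b\<in>Basis. from_wo l \<bullet> b \<le> from_wo u \<bullet> b"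
  proof
    fix b :: "(real,'a) vec" assume "b \<in> Basis"
    then obtain j where b: "b = axis j 1" by (auto simp: Basis_cart_real)
    have "l \<bullet> axis (Abs_wo j) 1 \<le> u \<bullet> axis (Abs_wo j) 1" using lu by (auto simp: Basis_cart_real)
    then show "from_wo l \<bullet> b \<le> from_wo u \<bullet> b"
      by (simp add: b from_wo_def cart_eq_inner_axis[symmetric])
  qed
  have "emeasure (distr lborel borel to_wo) (box l u) = emeasure lborel (box (from_wo l) (from_wo u))"
    using meas_to_wo by (subst emeasure_distr) (auto simp: pre)
  also have "\<dots> = ennreal (\<Prod>b\<in>Basis. (from_wo u - from_wo l) \<bullet> b)"
    using le by (simp add: emeasure_lborel_box_eq)
  also have "(\<Prod>b\<in>Basis. (from_wo u - from_wo l) \<bullet> b) = (\<Prod>b\<in>Basis. (u - l) \<bullet> b)"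
  proof -
    have "(\<Prod>b\<in>(Basis::(real,'a) vec set). (from_wo u - from_wo l) \<bullet> b) = (\<Prod>j\<in>UNIV. (u - l) $ Abs_wo j)"
      by (simp add: prod_Basis_cart cart_eq_inner_axis[symmetric] from_wo_def)
    also have "\<dots> = (\<Prod>i\<in>UNIV. (u - l) $ i)"
      by (rule prod.reindex_bij_betw) (auto simp: bij_betw_def inj_on_def Abs_wo_inject
           intro!: surjI[of _ Rep_wo] Rep_wo_inverse)
    also have "\<dots> = (\<Prod>b\<in>Basis. (u - l) \<bullet> b)"
      by (simp add: prod_Basis_cart cart_eq_inner_axis[symmetric])
    finally show ?thesis .
  qed
  finally show "emeasure (distr lborel borel to_wo) (box l u) = ennreal (\<Prod>b\<in>Basis. (u - l) \<bullet> b)" .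
qed simp


lemma to_wo_image: "to_wo ` S = from_wo -` S"
proof
  show "to_wo ` S \<subseteq> from_wo -` S" by auto
  show "from_wo -` S \<subseteq> to_wo ` S"
  proof
    fix w assume "w \<in> from_wo -` S"
    then have "from_wo w \<in> S" by simp
    moreover have "w = to_wo (from_wo w)" by simp
    ultimately show "w \<in> to_wo ` S" by blast
  qed
qed

lemma to_wo_inj: "inj to_wo"
  by (metis from_to injI)

lemma to_wo_eq [simp]: "to_wo a = to_wo b \<longleftrightarrow> a = b"
  by (metis from_to)

lemma Avg_transport:
  fixes S :: "(real,'a::finite) vec set" and g :: "(real,'a wo) vec \<Rightarrow> real"
  assumes S: "closed S"
    and meas: "(\<lambda>p. indicator (to_wo ` S) p *\<^sub>R g p) \<in> borel_measurable lborel"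
  shows "Avg g (to_wo ` S) = Avg (\<lambda>v. g (to_wo v)) S"
proof -
  have Sb: "S \<in> sets borel" using S by simp
  have Ib: "to_wo ` S \<in> sets borel"
    unfolding to_wo_image using measurable_sets[OF meas_from_wo Sb] by simp
  have m1: "to_wo \<in> lborel \<rightarrow>\<^sub>M borel" using meas_to_wo by simp
  have pre: "to_wo -` (to_wo ` S) = S" using to_wo_inj by (auto simp: inj_eq)
  have "measure lborel (to_wo ` S) = measure (distr lborel borel to_wo) (to_wo ` S)"
    by (simp add: distr_to_wo)
  also have "\<dots> = measure lborel S"
    by (subst measure_distr[OF m1]) (auto simp: Ib pre)
  finally have M: "measure lborel (to_wo ` S) = measure lborel S" .
  have Fm: "(\<lambda>p. indicator (to_wo ` S) p *\<^sub>R g p) \<in> borel_measurable borel"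
    using meas by simp
  have "(LINT w:to_wo ` S|lborel. g w) = (LINT w|lborel. indicator (to_wo ` S) w *\<^sub>R g w)"
    by (simp add: set_lebesgue_integral_def)
  also have "\<dots> = (LINT w|distr lborel borel to_wo. indicator (to_wo ` S) w *\<^sub>R g w)"
    by (simp add: distr_to_wo)
  also have "\<dots> = (LINT v|lborel. indicator (to_wo ` S) (to_wo v) *\<^sub>R g (to_wo v))"
    by (rule integral_distr[OF m1 Fm])
  also have "\<dots> = (LINT v|lborel. indicator S v *\<^sub>R g (to_wo v))"
    using to_wo_inj by (auto simp: indicator_def inj_eq intro!: Bochner_Integration.integral_cong)
  also have "\<dots> = (LINT v:S|lborel. g (to_wo v))"
    by (simp add: set_lebesgue_integral_def)
  finally show ?thesis unfolding Avg_def M by simp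
qed

lemma aff_to_wo:
  assumes "\<not> affine_dependent S"
  shows "\<not> affine_dependent (to_wo ` S)"
proof
  assume "affine_dependent (to_wo ` S)"
  then obtain a where a: "a \<in> S" "to_wo a \<in> affine hull (to_wo ` S - {to_wo a})"
    by (auto simp: affine_dependent_def)
  have "to_wo ` S - {to_wo a} = to_wo ` (S - {a})" using to_wo_inj by (auto simp: inj_eq)
  also have "affine hull \<dots> = to_wo ` (affine hull (S - {a}))"
    by (rule affine_hull_linear_image[symmetric]) (simp add: linear_to_wo flip: linear_conv_bounded_linear)
  finally obtain y where "y \<in> affine hull (S - {a})" "to_wo a = to_wo y" using a by auto
  then have "a \<in> affine hull (S - {a})" using to_wo_inj by (simp add: inj_eq)
  then show False using assms a(1) by (auto simp: affine_dependent_def)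
qed

lemma convex_on_transport:
  assumes "convex_on S f"
  shows "convex_on (to_wo ` S) (\<lambda>w. f (from_wo w))"
proof (rule convex_onI)
  fix t :: real and u v
  assume t: "0 < t" "t < 1" and u: "u \<in> to_wo ` S" and v: "v \<in> to_wo ` S"
  have "from_wo u \<in> S" "from_wo v \<in> S" using u v by auto
  moreover have "from_wo ((1 - t) *\<^sub>R u + t *\<^sub>R v) = (1 - t) *\<^sub>R from_wo u + t *\<^sub>R from_wo v"
    by (simp add: linear_add[OF linear_from_wo] linear_scale[OF linear_from_wo])
  ultimately show "f (from_wo ((1 - t) *\<^sub>R u + t *\<^sub>R v)) \<le> (1 - t) * f (from_wo u) + t * f (from_wo v)"
    using convex_onD[OF assms, of t "from_wo u" "from_wo v"] t by simp
next
  show "convex (to_wo ` S)"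
    by (rule convex_linear_image[OF linear_to_wo convex_on_imp_convex[OF assms]])
qed

theorem corollary11:
  fixes x :: "nat \<Rightarrow> real ^ 'n"
    and f :: "real ^ 'n \<Rightarrow> real"
  defines "n \<equiv> CARD('n)"
  defines "\<Delta> \<equiv> convex hull (x ` {0..n})"
  assumes inj: "inj_on x {0..n}"
    and aff: "\<not> affine_dependent (x ` {0..n})"
    and cvx: "convex_on \<Delta> f"
  shows "Avg f \<Delta> \<le>
      (real ((n + 1) div 2) / real (n + 1)) *
        ((1 / real ((n + 1) choose 2)) *
          (\<Sum>j\<in>{0..n}. \<Sum>i\<in>{0..<j}. f ((x i + x j) /\<^sub>R 2)))
    + (real_of_int \<lceil>real (n + 1) / 2\<rceil> / real (n + 1)) *
        ((\<Sum>i\<in>{0..n}. f (x i)) / real (n + 1))"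
proof -
  define x' where "x' = (\<lambda>k. to_wo (x k))"
  have nc: "n = CARD('n wo)" unfolding n_def by (rule card_wo[symmetric])
  have img: "x' ` {0..n} = to_wo ` (x ` {0..n})" unfolding x'_def by (simp add: image_image)
  have inj': "inj_on x' {0..n}" using inj unfolding x'_def by (auto simp: inj_on_def)
  have aff': "\<not> affine_dependent (x' ` {0..n})" unfolding img by (rule aff_to_wo[OF aff])
  obtain lam where lam:
    "\<And>k. linear (\<lambda>p. lam k p - lam k 0)"
    "\<And>k j. k \<le> n \<Longrightarrow> j \<le> n \<Longrightarrow> lam k (x' j) = (if k = j then 1 else 0)"
    "\<And>p. (\<Sum>k\<in>{0..n}. lam k p) = 1"
    "\<And>p. (\<Sum>k\<in>{0..n}. lam k p *\<^sub>R x' k) = p"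
    using bary_exists[OF nc inj' aff'] by blast
  interpret B: bary n x' lam
    by (rule bary.intro[OF nc lam(1) lam(2) lam(3) lam(4) aff'])
  have D': "B.Delta = to_wo ` \<Delta>"
    unfolding B.Delta_def \<Delta>_def img
    by (rule convex_hull_linear_image[OF linear_to_wo, symmetric])
  define f' where "f' = (\<lambda>w. f (from_wo w))"
  have cvx': "convex_on B.Delta f'"
    unfolding D' f'_def by (rule convex_on_transport[OF cvx])
  have closedD: "closed \<Delta>" unfolding \<Delta>_def by (intro compact_imp_closed compact_convex_hull finite_imp_compact) auto
  have "Avg f \<Delta> = Avg (\<lambda>v. f' (to_wo v)) \<Delta>" by (simp add: f'_def)
  also have "\<dots> = Avg f' (to_wo ` \<Delta>)"
    by (rule Avg_transport[OF closedD, symmetric]) (use B.f_meas[OF cvx'] D' in simp)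
  also have "\<dots> = Avg f' B.Delta" by (simp add: D')
  also have "\<dots> \<le> (real ((n + 1) div 2) / real (n + 1)) *
        ((1 / real ((n + 1) choose 2)) *
          (\<Sum>j\<in>{0..n}. \<Sum>i\<in>{0..<j}. f' ((x' i + x' j) /\<^sub>R 2)))
    + (real_of_int \<lceil>real (n + 1) / 2\<rceil> / real (n + 1)) *
        ((\<Sum>i\<in>{0..n}. f' (x' i)) / real (n + 1))"
    by (rule B.main[OF cvx'])
  also have "(\<lambda>i j. f' ((x' i + x' j) /\<^sub>R 2)) = (\<lambda>i j. f ((x i + x j) /\<^sub>R 2))"
  proof (intro ext)
    fix i j
    have "(x' i + x' j) /\<^sub>R 2 = to_wo ((x i + x j) /\<^sub>R 2)"
      unfolding x'_def by (simp add: linear_add[OF linear_to_wo] linear_scale[OF linear_to_wo])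
    then show "f' ((x' i + x' j) /\<^sub>R 2) = f ((x i + x j) /\<^sub>R 2)" by (simp add: f'_def)
  qed
  also have "(\<lambda>i. f' (x' i)) = (\<lambda>i. f (x i))" by (simp add: f'_def x'_def)
  finally show ?thesis .
qed

end
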